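(* Let $0<q<1/2$, $p=1-q$, $z\ge 1$ an integer and $\kappa>0$. Define $$P(z,\kappa)=1-\sum_{k=0}^{z-1}\left(1-\left(\frac qp\right)^{z-k}\right)\frac{\mu^k}{k!}e^{-\mu},\qquad \mu=\kappa z\frac qp.$$ Then $$P(z,\kappa)=1-Q\!\left(z,\kappa z\frac qp\right)+\left(\frac qp\right)^z e^{\kappa z\frac{p-q}{p}}\,Q(z,\kappa z),$$ where $Q(a,x)=\Gamma(a,x)/\Gamma(a)$, with $\Gamma(a,x)=\int_x^{+\infty}t^{a-1}e^{-t}\,dt$, is the regularized upper incomplete gamma function.
   Context: $P(z,\kappa)$ is the probability of success of a double-spend attack (attackers with relative hash power $q$, honest miners with $p$) conditional on the honest miners having mined $z$ blocks in time $\tau_1=\kappa z t_0$, where $t_0$ is the mean honest block time; during this time the number of attacker blocks is Poisson with mean $\mu=\kappa zq/p$, and attackers lagging $m$ blocks behind catch up with probability $(q/p)^m$. *)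

theory Defs
  imports "HOL-Analysis.Analysis"
begin

definition upper_inc_Gamma :: "real \<Rightarrow> real \<Rightarrow> real" where
  "upper_inc_Gamma a x = integral {x..} (\<lambda>t. t powr (a - 1) * exp (- t))"

definition reg_upper_Gamma :: "real \<Rightarrow> real \<Rightarrow> real" where
  "reg_upper_Gamma a x = upper_inc_Gamma a x / Gamma a"

definition P_attack :: "real \<Rightarrow> nat \<Rightarrow> real \<Rightarrow> real" where
  "P_attack q z \<kappa> =
     (let p = 1 - q; \<mu> = \<kappa> * real z * (q / p) in
      1 - (\<Sum>k<z. (1 - (q / p) ^ (z - k)) * (\<mu> ^ k / fact k) * exp (- \<mu>)))"

end

theory Submission
  imports Defs
begin

definition Gs :: "nat \<Rightarrow> real \<Rightarrow> real" where
  "Gs m t = exp (- t) * (\<Sum>k\<le>m. t ^ k / fact k)"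

lemma Gs_deriv: "(Gs m has_real_derivative (- exp (- t) * t ^ m / fact m)) (at t)"
proof (induction m)
  case 0
  show ?case unfolding Gs_def by (auto intro!: derivative_eq_intros)
next
  case (Suc m)
  have eq: "Gs (Suc m) = (\<lambda>t. Gs m t + exp (- t) * (t ^ Suc m / fact (Suc m)))"
    by (auto simp: Gs_def algebra_simps)
  have d2: "((\<lambda>t. exp (- t) * (t ^ Suc m / fact (Suc m))) has_real_derivative
      (- exp (- t) * (t ^ Suc m / fact (Suc m)) + exp (- t) * (real (Suc m) * t ^ m / fact (Suc m)))) (at t)"
  proof -
    have a: "((\<lambda>t. t ^ Suc m / fact (Suc m)) has_real_derivative (real (Suc m) * t ^ m / fact (Suc m))) (at t)"
      using DERIV_cdivide[OF DERIV_pow[of "Suc m" t], of "fact (Suc m)"] by simp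
    have b: "((\<lambda>t. exp (- t)) has_real_derivative (- exp (- t))) (at t)"
      by (auto intro!: derivative_eq_intros)
    show ?thesis using DERIV_mult[OF b a] by (simp add: algebra_simps)
  qed
  have "real (Suc m) * t ^ m / fact (Suc m) = t ^ m / fact m"
    by (simp add: fact_Suc field_simps del: of_nat_Suc)
  then show ?case unfolding eq
    using DERIV_add[OF Suc d2] by (simp add: algebra_simps)
qed

lemma Gs_lim: "(Gs m \<longlongrightarrow> 0) at_top"
proof -
  have h: "((\<lambda>t. t ^ k / exp t / fact k) \<longlongrightarrow> (0::real)) at_top" for k
    by (rule tendsto_divide_zero[OF tendsto_power_div_exp_0])
  have "((\<lambda>t. \<Sum>k\<le>m. t ^ k / exp t / fact k) \<longlongrightarrow> (0::real)) at_top"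
    using tendsto_null_sum[of "{..m}" "\<lambda>t k. t ^ k / exp t / fact k" at_top] h by blast
  moreover have "Gs m = (\<lambda>t. \<Sum>k\<le>m. t ^ k / exp t / fact k)"
    by (auto simp: Gs_def sum_distrib_left exp_minus field_simps)
  ultimately show ?thesis by simp
qed

lemma inc_gamma_nat:
  assumes "x > 0"
  shows "upper_inc_Gamma (real (Suc m)) x = fact m * Gs m x"
proof -
  let ?h = "\<lambda>t::real. t powr (real (Suc m) - 1) * exp (- t)"
  have fi: "(?h has_integral (fact m * Gs m x - fact m * Gs m y)) {x..y}" if "x \<le> y" for y
  proof -
    have "((\<lambda>t. t ^ m * exp (- t)) has_integral (- fact m * Gs m y - (- fact m * Gs m x))) {x..y}"
    proof (rule fundamental_theorem_of_calculus[OF that])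
      fix t assume "t \<in> {x..y}"
      have "((\<lambda>t. - fact m * Gs m t) has_real_derivative (- fact m * (- exp (- t) * t ^ m / fact m))) (at t)"
        by (intro DERIV_cmult Gs_deriv)
      then have "((\<lambda>t. - fact m * Gs m t) has_real_derivative (t ^ m * exp (- t))) (at t)"
        by (simp add: mult.commute)
      then show "((\<lambda>t. - fact m * Gs m t) has_vector_derivative (t ^ m * exp (- t))) (at t within {x..y})"
        by (simp add: has_real_derivative_iff_has_vector_derivative has_vector_derivative_at_within)
    qed
    moreover have "\<And>t. t \<in> {x..y} \<Longrightarrow> ?h t = t ^ m * exp (- t)"
      using assms by (auto simp: powr_realpow)
    ultimately show ?thesis
      by (subst has_integral_cong[of _ _ "\<lambda>t. t ^ m * exp (- t)"]) (auto simp: algebra_simps)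
  qed
  have "(?h has_integral (fact m * Gs m x)) {x..}"
  proof (rule has_integral_to_inf)
    fix y show "?h integrable_on {x..y}"
      using fi by (cases "x \<le> y") auto
  next
    have "\<forall>\<^sub>F y in at_top. fact m * Gs m x - fact m * Gs m y = integral {x..y} ?h"
      by (rule eventually_mono[OF eventually_ge_at_top[of x]]) (rule integral_unique[OF fi, symmetric])
    moreover have "((\<lambda>y. fact m * Gs m x - fact m * Gs m y) \<longlongrightarrow> fact m * Gs m x - fact m * 0) at_top"
      by (intro tendsto_intros Gs_lim)
    ultimately show "((\<lambda>y. integral {x..y} ?h) \<longlongrightarrow> fact m * Gs m x) at_top"
      using tendsto_cong by fastforce
  next
    fix y assume "x \<le> y" then show "?h y \<ge> 0" by auto
  qed
  then show ?thesis unfolding upper_inc_Gamma_def by (rule integral_unique)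
qed

lemma reg_nat:
  assumes "x > 0" "z \<ge> 1"
  shows "reg_upper_Gamma (real z) x = exp (- x) * (\<Sum>k<z. x ^ k / fact k)"
proof -
  obtain m where z: "z = Suc m" using assms by (cases z) auto
  have g: "Gamma (real (Suc m)) = fact m"
    using Gamma_fact[of m] by (simp add: add.commute)
  have "{..<Suc m} = {..m}" by auto
  then show ?thesis using assms
    by (simp add: z reg_upper_Gamma_def inc_gamma_nat g Gs_def del: of_nat_Suc)
qed

theorem mainTheorem5:
  fixes q \<kappa> :: real and z :: nat
  assumes "0 < q" and "q < 1/2" and "1 \<le> z" and "0 < \<kappa>"
  defines "p \<equiv> 1 - q"
  shows "P_attack q z \<kappa> =
           1 - reg_upper_Gamma (real z) (\<kappa> * real z * (q / p))
             + (q / p) ^ z * exp (\<kappa> * real z * ((p - q) / p)) * reg_upper_Gamma (real z) (\<kappa> * real z)"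
proof -
  define r where "r = q / p"
  define c where "c = \<kappa> * real z"
  have p: "p > 0" using assms by (simp add: p_def)
  have r: "r > 0" using p assms by (simp add: r_def)
  have c: "c > 0" using assms by (simp add: c_def)
  have pq: "(p - q) / p = 1 - r" using p by (simp add: r_def field_simps)
  have e: "exp (c * (1 - r)) * exp (- c) = exp (- (c * r))"
    by (simp add: exp_add[symmetric] algebra_simps)
  have key: "(\<Sum>k<z. r ^ (z - k) * ((c * r) ^ k / fact k)) = r ^ z * (\<Sum>k<z. c ^ k / fact k)"
    unfolding sum_distrib_left
  proof (rule sum.cong)
    fix k assume "k \<in> {..<z}"
    then have "r ^ (z - k) * r ^ k = r ^ z" by (simp add: power_add[symmetric])
    then show "r ^ (z - k) * ((c * r) ^ k / fact k) = r ^ z * (c ^ k / fact k)"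
      by (simp add: power_mult_distrib field_simps)
  qed simp
  have "P_attack q z \<kappa> = 1 - exp (- (c * r)) * (\<Sum>k<z. (c * r) ^ k / fact k)
      + exp (- (c * r)) * (\<Sum>k<z. r ^ (z - k) * ((c * r) ^ k / fact k))"
  proof -
    have s: "(\<Sum>k<z. (1 - r^(z-k)) * ((c*r)^k/fact k) * exp(-(c*r))) = exp(-(c*r)) * (\<Sum>k<z. (c*r)^k/fact k) - exp(-(c*r)) * (\<Sum>k<z. r^(z-k)*((c*r)^k/fact k))"
      unfolding sum_distrib_left sum_subtractf[symmetric] by (rule sum.cong) (auto simp: field_simps)
    show ?thesis
      unfolding P_attack_def Let_def p_def[symmetric] r_def[symmetric] c_def[symmetric]
      using s by (simp add: mult.assoc)
  qed
  also have "\<dots> = 1 - exp (- (c * r)) * (\<Sum>k<z. (c * r) ^ k / fact k)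
      + r ^ z * exp (c * (1 - r)) * (exp (- c) * (\<Sum>k<z. c ^ k / fact k))"
    unfolding key by (simp add: e[symmetric] algebra_simps)
  finally have calc: "P_attack q z \<kappa> = 1 - exp (- (c * r)) * (\<Sum>k<z. (c * r) ^ k / fact k)
      + r ^ z * exp (c * (1 - r)) * (exp (- c) * (\<Sum>k<z. c ^ k / fact k))" .
  have R1: "reg_upper_Gamma (real z) (c * r) = exp (- (c * r)) * (\<Sum>k<z. (c * r) ^ k / fact k)"
    using reg_nat[of "c * r" z] r c assms by simp
  have R2: "reg_upper_Gamma (real z) c = exp (- c) * (\<Sum>k<z. c ^ k / fact k)"
    using reg_nat[of c z] c assms by simp
  show ?thesis unfolding pq r_def[symmetric] c_def[symmetric] R1 R2 by (rule calc)
qed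

end
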